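(* Let $k \ge 2$ and $q \ge 0$ be integers with $k$ even, and let $s \in \{0,1\}$ be the unique integer satisfying $s \equiv q + \frac{k-2}{2} \pmod 2$. Then, for any integer $n$ such that \[n \ge \max\left\{k, \frac{k^2}{4} + \frac{q-s}{2}k+s\right\}\] and any function $f:[n]\to \{-1,1\}$ with $|f([n])| \le q$, there is a $k$-block $B\subseteq[n]$ with $f(B)=0$.
   Context: $[n]=\{1,\dots,n\}$; $f(Y)=\sum_{y\in Y}f(y)$; a $k$-block is a set of $k$ consecutive integers. *)

theory Defs
  imports Main
begin

definition block :: "int \<Rightarrow> int \<Rightarrow> int set" where
  "block k b = {b..b + k - 1}"

end

theory Submission
  imports Defs
begin
lemma arith_core:
  fixes q s n m r j :: int
  assumes j: "j \<ge> 1" and "q \<ge> 0" and s: "s \<in> {0,1}" and sp: "s mod 2 = (q + j - 1) mod 2"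
    and n: "n = 2*j*m + r" and r: "0 \<le> r" "r < 2*j"
    and nb: "n \<ge> j*j + (q-s)*j + s"
    and A: "2*m - r \<le> q" and B: "2*m + 2 - 2*j + r \<le> q"
  shows False
proof -
  have e1: "j*(2*m) \<le> j*(q+r)" using A j by (intro mult_left_mono) auto
  have e2: "j*(2*m) \<le> j*(q+2*j-2-r)" using B j by (intro mult_left_mono) auto
  consider "r \<le> j-1-s" | "r \<ge> j+s" | "s = 1" "r = j" | "s = 1" "r = j - 1"
    using s by force
  then show False
  proof cases
    case 1
    have "(j+1)*r \<le> (j+1)*(j-1-s)" using 1 j by (intro mult_left_mono) auto
    then show False using e1 n nb s by (auto simp: algebra_simps)
  next
    case 2
    have "(j-1)*(j+s) \<le> (j-1)*r" using 2 j by (intro mult_left_mono) auto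
    then show False using e2 n nb s j by (auto simp: algebra_simps; linarith)
  next
    case 3
    then show False using e2 n nb by (auto simp: algebra_simps)
  next
    case 4
    have "(q + j - 1) mod 2 = 1" using 4 sp by simp
    then have "2*m \<le> q + j - 2" using A 4 by presburger
    then have "j*(2*m) \<le> j*(q+j-2)" using j by (intro mult_left_mono) auto
    then show False using n nb 4 by (auto simp: algebra_simps)
  qed
qed

lemma split_sum:
  fixes f :: "int \<Rightarrow> int"
  assumes "a - 1 \<le> b" "b \<le> c"
  shows "sum f {a..c} = sum f {a..b} + sum f {b+1..c}"
proof -
  have "{a..c} = {a..b} \<union> {b+1..c}" using assms by auto
  moreover have "{a..b} \<inter> {b+1..c} = {}" by auto
  ultimately show ?thesis by (simp add: sum.union_disjoint)
qed

lemma bnd: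
  fixes f :: "int \<Rightarrow> int"
  assumes "\<forall>x\<in>{1..n}. f x \<in> {-1,1}" "1 \<le> a" "b \<le> n" "a \<le> b + 1"
  shows "- (b - a + 1) \<le> sum f {a..b}" "sum f {a..b} \<le> b - a + 1"
proof -
  have "sum (\<lambda>_. -1) {a..b} \<le> sum f {a..b}"
  proof (intro sum_mono)
    fix x assume "x \<in> {a..b}"
    then have "f x \<in> {-1,1}" using assms by auto
    then show "-1 \<le> f x" by auto
  qed
  then show "- (b - a + 1) \<le> sum f {a..b}" using assms by simp
  have "sum f {a..b} \<le> sum (\<lambda>_. 1) {a..b}"
  proof (intro sum_mono)
    fix x assume "x \<in> {a..b}"
    then have "f x \<in> {-1,1}" using assms by auto
    then show "f x \<le> 1" by auto
  qed
  then show "sum f {a..b} \<le> b - a + 1" using assms by simp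
qed

lemma blocks_sum:
  fixes f :: "int \<Rightarrow> int"
  assumes k: "k \<ge> 1"
    and pos: "\<forall>b. 1 \<le> b \<and> b + k - 1 \<le> n \<longrightarrow> sum f (block k b) \<ge> 2"
  shows "k * int i \<le> n \<Longrightarrow> sum f {1..k * int i} \<ge> 2 * int i"
proof (induction i)
  case 0
  then show ?case by simp
next
  case (Suc i)
  have ki: "k * int (Suc i) = k * int i + k" by (simp add: algebra_simps)
  have nn: "0 \<le> k * int i" using k by simp
  have "sum f {1..k * int (Suc i)} = sum f {1..k*int i} + sum f {k * int i + 1..k * int i + k}"
    unfolding ki using k nn by (intro split_sum) auto
  moreover have "sum f {k * int i + 1..k * int i + k} \<ge> 2"
    using pos[rule_format, of "k * int i + 1"] Suc.prems ki nn by (simp add: block_def)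
  moreover have "sum f {1..k*int i} \<ge> 2 * int i" using Suc k ki by simp
  ultimately show ?case by simp
qed

lemma pos_case:
  fixes k q s n :: int and f :: "int \<Rightarrow> int"
  assumes "k \<ge> 2" and "even k" and "q \<ge> 0"
    and "s \<in> {0, 1}" and "s mod 2 = (q + (k - 2) div 2) mod 2"
    and "n \<ge> k"
    and "4 * n \<ge> k ^ 2 + 2 * (q - s) * k + 4 * s"
    and fv: "\<forall>x\<in>{1..n}. f x \<in> {-1, 1}"
    and pos: "\<forall>b. 1 \<le> b \<and> b + k - 1 \<le> n \<longrightarrow> sum f (block k b) \<ge> 2"
  shows "sum f {1..n} > q"
proof (rule ccontr)
  assume nq: "\<not> sum f {1..n} > q"
  define m where "m = n div k"
  define r where "r = n mod k"
  obtain j where j: "k = 2*j" using assms(2) by auto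
  have nmr: "n = k*m + r" unfolding m_def r_def by simp
  have r0: "0 \<le> r" "r < k" unfolding r_def using assms by auto
  have m1: "m \<ge> 1" unfolding m_def using assms zdiv_mono1[of k n k] by simp
  obtain mm where mm: "m = int mm" using m1 by (metis nonneg_int_cases order_trans zero_le_one)
  have km0: "k*m \<ge> k" using m1 assms by simp
  have S1: "sum f {1..k*m} \<ge> 2*m"
    using blocks_sum[of k n f mm] assms mm nmr r0 by simp
  have "sum f {1..n} = sum f {1..k*m} + sum f {k*m+1..n}"
    using nmr r0 km0 assms by (intro split_sum) auto
  moreover have "sum f {k*m+1..n} \<ge> -(n - (k*m+1) + 1)"
    using bnd(1)[OF fv, of "k*m+1" n] nmr r0 km0 assms by auto
  ultimately have A: "2*m - r \<le> sum f {1..n}" using S1 nmr by linarith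
  have mm1: "m - 1 = int (mm - 1)" using mm m1 by simp
  have S2: "sum f {1..k*(m-1)} \<ge> 2*(m-1)"
    using blocks_sum[of k n f "mm - 1"] assms mm1 nmr r0 km0
    by (simp add: algebra_simps)
  have km1: "k*(m-1) = k*m - k" by (simp add: algebra_simps)
  have "sum f {1..n} = sum f {1..k*(m-1)} + sum f {k*(m-1)+1..n}"
    using nmr r0 km0 assms km1 by (intro split_sum) auto
  moreover have "sum f {k*(m-1)+1..n} = sum f {k*(m-1)+1..k*m} + sum f {k*m+1..n}"
    using nmr r0 km0 assms km1 by (intro split_sum) auto
  moreover have "sum f {k*(m-1)+1..k*m} \<ge> 2"
    using pos[rule_format, of "k*(m-1)+1"] km1 km0 nmr r0 assms by (simp add: block_def)
  moreover have "sum f {n-k+1..n} = sum f {n-k+1..k*m} + sum f {k*m+1..n}"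
    using nmr r0 km0 assms by (intro split_sum) auto
  moreover have "sum f {n-k+1..n} \<ge> 2"
    using pos[rule_format, of "n-k+1"] assms by (simp add: block_def)
  moreover have "sum f {n-k+1..k*m} \<le> k*m - (n-k+1) + 1"
    using bnd(2)[OF fv, of "n-k+1" "k*m"] nmr r0 km0 assms by auto
  ultimately have B: "2*m + 2 - k + r \<le> sum f {1..n}" using S2 nmr by (smt (verit))
  have jd: "(k - 2) div 2 = j - 1" using j by simp
  have "1 \<le> j" using j assms by simp
  moreover have "s mod 2 = (q + j - 1) mod 2" using assms(5) jd by (simp add: add_diff_eq)
  moreover have "n = 2*j*m + r" using nmr j by simp
  moreover have "n \<ge> j*j + (q-s)*j + s" using assms(7) j by (simp add: power2_eq_square algebra_simps)
  ultimately show False using arith_core[of j q s n m r] assms r0 j A B nq by simp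
qed

lemma block_even:
  fixes f :: "int \<Rightarrow> int"
  assumes fv: "\<forall>x\<in>{1..n}. f x \<in> {-1,1}" and ke: "even k" and k: "k \<ge> 1" and b: "1 \<le> b" "b + k - 1 \<le> n"
  shows "even (sum f (block k b))"
proof -
  have "{a \<in> block k b. odd (f a)} = block k b"
  proof (intro set_eqI iffI)
    fix x assume x: "x \<in> block k b"
    then have "x \<in> {1..n}" using b unfolding block_def by simp
    then have "f x \<in> {-1,1}" using fv by blast
    then have "odd (f x)" by auto
    then show "x \<in> {a \<in> block k b. odd (f a)}" using x by simp
  qed simp
  moreover have "finite (block k b)" unfolding block_def by simp
  moreover have "card (block k b) = nat k" unfolding block_def by simp
  moreover have "even (nat k)" using ke k by (simp add: even_nat_iff)
  ultimately show ?thesis by (simp add: even_sum_iff)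
qed

lemma block_step:
  fixes f :: "int \<Rightarrow> int"
  assumes fv: "\<forall>x\<in>{1..n}. f x \<in> {-1,1}" and k: "k \<ge> 1" and b: "1 \<le> b" "b + k \<le> n"
  shows "\<bar>sum f (block k (b+1)) - sum f (block k b)\<bar> \<le> 2"
proof -
  have e1: "sum f {b..b+k-1} = sum f {b..b} + sum f {b+1..b+k-1}"
    using k by (intro split_sum) auto
  have e2: "sum f {b+1..b+k} = sum f {b+1..b+k-1} + sum f {b+k-1+1..b+k}"
    using k by (intro split_sum) auto
  have "f b \<in> {-1,1}" using fv b k by simp
  moreover have "f (b+k) \<in> {-1,1}" using fv b k by simp
  moreover have "sum f (block k (b+1)) - sum f (block k b) = f (b+k) - f b"
    unfolding block_def using e1 e2 by (simp add: algebra_simps)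
  ultimately show ?thesis by auto
qed

lemma all_pos:
  fixes f :: "int \<Rightarrow> int"
  assumes fv: "\<forall>x\<in>{1..n}. f x \<in> {-1,1}" and ke: "even k" and k: "k \<ge> 1"
    and nz: "\<forall>b. 1 \<le> b \<and> b + k - 1 \<le> n \<longrightarrow> sum f (block k b) \<noteq> 0"
    and g1: "sum f (block k 1) > 0"
  shows "\<forall>b. 1 \<le> b \<and> b + k - 1 \<le> n \<longrightarrow> sum f (block k b) \<ge> 2"
proof -
  have *: "b + k - 1 \<le> n \<longrightarrow> sum f (block k b) > 0" if "1 \<le> b" for b
    using that
  proof (induction b rule: int_ge_induct)
    case base
    then show ?case using g1 by simp
  next
    case (step b)
    show ?case
    proof
      assume b1: "b + 1 + k - 1 \<le> n"
      then have "sum f (block k b) > 0" using step by simp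
      moreover have "even (sum f (block k b))"
        using block_even[OF fv ke k, of b] step b1 by simp
      ultimately have "sum f (block k b) \<ge> 2" by presburger
      moreover have "\<bar>sum f (block k (b+1)) - sum f (block k b)\<bar> \<le> 2"
        using block_step[OF fv k, of b] step b1 by simp
      moreover have "sum f (block k (b+1)) \<noteq> 0" using nz step b1 by simp
      ultimately show "sum f (block k (b+1)) > 0" by linarith
    qed
  qed
  show ?thesis
  proof (intro allI impI)
    fix b assume b: "1 \<le> b \<and> b + k - 1 \<le> n"
    then have "sum f (block k b) > 0" using * by simp
    moreover have "even (sum f (block k b))" using block_even[OF fv ke k, of b] b by simp
    ultimately show "sum f (block k b) \<ge> 2" by presburger
  qed
qed

theorem corollary2p3:
  fixes k q s n :: int and f :: "int \<Rightarrow> int"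
  assumes "k \<ge> 2" and "even k" and "q \<ge> 0"
    and "s \<in> {0, 1}" and "s mod 2 = (q + (k - 2) div 2) mod 2"
    and "n \<ge> k"
    and "4 * n \<ge> k ^ 2 + 2 * (q - s) * k + 4 * s"
    and "\<forall>x\<in>{1..n}. f x \<in> {-1, 1}"
    and "\<bar>sum f {1..n}\<bar> \<le> q"
  shows "\<exists>b. block k b \<subseteq> {1..n} \<and> sum f (block k b) = 0"
proof (rule ccontr)
  assume "\<not> ?thesis"
  then have nz: "\<forall>b. 1 \<le> b \<and> b + k - 1 \<le> n \<longrightarrow> sum f (block k b) \<noteq> 0"
    unfolding block_def by auto
  have fv': "\<forall>x\<in>{1..n}. - f x \<in> {-1, 1}" using assms(8) by auto
  have nz': "\<forall>b. 1 \<le> b \<and> b + k - 1 \<le> n \<longrightarrow> sum (\<lambda>x. - f x) (block k b) \<noteq> 0"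
    using nz by (simp add: sum_negf)
  have k1: "k \<ge> 1" using assms by simp
  have "sum f (block k 1) \<noteq> 0" using nz assms by simp
  then consider "sum f (block k 1) > 0" | "sum (\<lambda>x. - f x) (block k 1) > 0"
    by (force simp: sum_negf)
  then show False
  proof cases
    case 1
    have "sum f {1..n} > q"
      using pos_case[OF assms(1-7) assms(8) all_pos[OF assms(8) assms(2) k1 nz 1]] .
    then show False using assms(9) by simp
  next
    case 2
    have "sum (\<lambda>x. - f x) {1..n} > q"
      using pos_case[OF assms(1-7) fv' all_pos[OF fv' assms(2) k1 nz' 2]] .
    then show False using assms(9) by (simp add: sum_negf)
  qed
qed

end
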